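(* Let $N\in\mathbb{N}$, $h=L/N$, $M>0$, $\mathcal{M}_0>0$, let $\mathcal{M}$ be a mobility function and $\phi^n\in\mathcal{C}_{\rm per}$ be such that the face-centered mobility $\check{\mathcal{M}}^n$ satisfies $\check{\mathcal{M}}^n\ge\mathcal{M}_0$ at all face centers. Suppose $\phi_1,\phi_2\in\mathcal{C}_{\rm per}$ satisfy $\langle\phi_1-\phi_2,1\rangle=0$, $\|\phi_1\|_\infty<1$ and $\|\phi_2\|_\infty\le M$. Then $$\|\mathcal{L}_{\check{\mathcal{M}}^n}^{-1}(\phi_1-\phi_2)\|_\infty\le C_4:=C_3\mathcal{M}_0^{-1}h^{-1/2},$$ where $C_3>0$ depends only upon $M$ and $\Omega$.
   Context: $\Omega=(0,L)^3$, periodic; $p_i=(i-\tfrac12)h$. $\mathcal{C}_{\rm per}$: real $N$-periodic grid functions on cell centers; $\langle\nu,\xi\rangle=h^3\sum_{i,j,k=1}^N\nu_{i,j,k}\xi_{i,j,k}$; $\mathring{\mathcal{C}}_{\rm per}$: those with zero sum; $\|\nu\|_\infty=\max|\nu_{i,j,k}|$. The face-centered mobility is $\check{\mathcal{M}}^n_{i+1/2,j,k}=\mathcal{M}(\tfrac12(\phi^n_{i+1,j,k}+\phi^n_{i,j,k}))$ and analogously on $y$- and $z$-faces. For a positive face function $\mathcal{D}$, $\nabla_h\cdot(\mathcal{D}\nabla_h\nu)_{i,j,k}=h^{-2}[\mathcal{D}_{i+1/2,j,k}(\nu_{i+1,j,k}-\nu_{i,j,k})-\mathcal{D}_{i-1/2,j,k}(\nu_{i,j,k}-\nu_{i-1,j,k})]$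 plus the analogous $y$ and $z$ terms. $\mathcal{L}_{\check{\mathcal{M}}^n}^{-1}\psi$, for $\psi\in\mathring{\mathcal{C}}_{\rm per}$, is the unique $v\in\mathring{\mathcal{C}}_{\rm per}$ with $-\nabla_h\cdot(\check{\mathcal{M}}^n\nabla_h v)=\psi$. *)

theory Defs
  imports Complex_Main
begin

type_synonym grid = "int \<Rightarrow> int \<Rightarrow> int \<Rightarrow> real"

text \<open>Cell-centred grid functions, indexed by integers (i,j,k); cell (i,j,k) with
  1 <= i,j,k <= N is centred at ((i-1/2)h,(j-1/2)h,(k-1/2)h).  N-periodic in each index.\<close>
definition C_per :: "nat \<Rightarrow> grid set" where
  "C_per N = {f. \<forall>i j k. f (i + int N) j k = f i j k \<and> f i (j + int N) k = f i j k
                         \<and> f i j (k + int N) = f i j k}"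

definition cells :: "nat \<Rightarrow> (int \<times> int \<times> int) set" where
  "cells N = {1..int N} \<times> {1..int N} \<times> {1..int N}"

definition ip :: "real \<Rightarrow> nat \<Rightarrow> grid \<Rightarrow> grid \<Rightarrow> real" where
  "ip h N \<nu> \<xi> = h ^ 3 * (\<Sum>(i,j,k)\<in>cells N. \<nu> i j k * \<xi> i j k)"

definition C_per0 :: "nat \<Rightarrow> grid set" where
  "C_per0 N = {f \<in> C_per N. (\<Sum>(i,j,k)\<in>cells N. f i j k) = 0}"

definition sup_norm :: "nat \<Rightarrow> grid \<Rightarrow> real" where
  "sup_norm N \<nu> = Max ((\<lambda>(i,j,k). \<bar>\<nu> i j k\<bar>) ` cells N)"

text \<open>Face functions: Dx i j k is the value at face (i+1/2,j,k), Dy i j k at (i,j+1/2,k),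
  Dz i j k at (i,j,k+1/2).\<close>
definition face_mob_x :: "(real \<Rightarrow> real) \<Rightarrow> grid \<Rightarrow> grid" where
  "face_mob_x Mob \<phi> i j k = Mob ((\<phi> (i+1) j k + \<phi> i j k) / 2)"
definition face_mob_y :: "(real \<Rightarrow> real) \<Rightarrow> grid \<Rightarrow> grid" where
  "face_mob_y Mob \<phi> i j k = Mob ((\<phi> i (j+1) k + \<phi> i j k) / 2)"
definition face_mob_z :: "(real \<Rightarrow> real) \<Rightarrow> grid \<Rightarrow> grid" where
  "face_mob_z Mob \<phi> i j k = Mob ((\<phi> i j (k+1) + \<phi> i j k) / 2)"

definition div_grad :: "real \<Rightarrow> grid \<Rightarrow> grid \<Rightarrow> grid \<Rightarrow> grid \<Rightarrow> grid" where
  "div_grad h Dx Dy Dz v i j k =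
     (Dx i j k * (v (i+1) j k - v i j k) - Dx (i-1) j k * (v i j k - v (i-1) j k)
    + Dy i j k * (v i (j+1) k - v i j k) - Dy i (j-1) k * (v i j k - v i (j-1) k)
    + Dz i j k * (v i j (k+1) - v i j k) - Dz i j (k-1) * (v i j k - v i j (k-1))) / h^2"

definition L_inv :: "nat \<Rightarrow> real \<Rightarrow> (real \<Rightarrow> real) \<Rightarrow> grid \<Rightarrow> grid \<Rightarrow> grid" where
  "L_inv N h Mob \<phi>n \<psi> = (THE v. v \<in> C_per0 N \<and>
      (\<forall>i j k. - div_grad h (face_mob_x Mob \<phi>n) (face_mob_y Mob \<phi>n) (face_mob_z Mob \<phi>n) v i j k
               = \<psi> i j k))"

end

theory Submission
  imports Defs "HOL-Library.Function_Algebras"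
begin

lemma cs_sum: fixes x :: "'a \<Rightarrow> real" assumes "finite A"
  shows "(\<Sum>i\<in>A. x i)^2 \<le> real (card A) * (\<Sum>i\<in>A. (x i)^2)"
proof -
  have "(\<Sum>i\<in>A. x i)^2 = (\<Sum>i\<in>A. \<Sum>j\<in>A. x i * x j)"
    by (simp add: power2_eq_square sum_product)
  also have "\<dots> \<le> (\<Sum>i\<in>A. \<Sum>j\<in>A. (x i)^2 / 2 + (x j)^2 / 2)"
  proof (intro sum_mono)
    fix i j
    have "0 \<le> (x i - x j)^2" by simp
    then show "x i * x j \<le> (x i)^2 / 2 + (x j)^2 / 2" by (simp add: power2_diff)
  qed
  also have "\<dots> = real (card A) * (\<Sum>i\<in>A. (x i)^2)"
    by (simp add: sum.distrib sum_divide_distrib[symmetric] sum_distrib_left[symmetric] sum.swap[of "\<lambda>i j. (x j)^2 / 2"])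
  finally show ?thesis .
qed

lemma per1: fixes g :: "int \<Rightarrow> 'b" assumes "\<And>t. g (t + int N) = g t"
  shows "g (t + m * int N) = g t"
proof (induction m rule: int_induct[where k=0])
  case base then show ?case by simp
next
  case (step1 i) then show ?case using assms[of "t + i * int N"] by (simp add: algebra_simps)
next
  case (step2 i) then show ?case using assms[of "t + (i - 1) * int N"] by (simp add: algebra_simps)
qed

lemma persum1: fixes g :: "int \<Rightarrow> real" assumes "\<And>t. g (t + int N) = g t"
  shows "(\<Sum>n<N. g (a + int n)) = (\<Sum>n<N. g (1 + int n))"
proof -
  have step: "(\<Sum>n<N. g (b + 1 + int n)) = (\<Sum>n<N. g (b + int n))" for b
  proof (cases N)
    case 0 then show ?thesis by simp
  next
    case (Suc n')
    have "(\<Sum>n<N. g (b + 1 + int n)) = (\<Sum>n<n'. g (b + 1 + int n)) + g (b + int N)"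
      using Suc by (simp add: algebra_simps)
    also have "g (b + int N) = g b" by (rule assms)
    also have "(\<Sum>n<N. g (b + int n)) = g b + (\<Sum>n<n'. g (b + int (Suc n)))"
      unfolding Suc sum.lessThan_Suc_shift by simp
    ultimately show ?thesis by (simp add: algebra_simps)
  qed
  show ?thesis
  proof (induction a rule: int_induct[where k=1])
    case base then show ?case by simp
  next
    case (step1 i) then show ?case using step[of i] by simp
  next
    case (step2 i) then show ?case using step[of "i - 1"] by simp
  qed
qed



definition nsum3 :: "grid \<Rightarrow> int \<Rightarrow> int \<Rightarrow> int \<Rightarrow> nat \<Rightarrow> real" where
  "nsum3 g a1 a2 a3 s = (\<Sum>n1<s. \<Sum>n2<s. \<Sum>n3<s. g (a1 + int n1) (a2 + int n2) (a3 + int n3))"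

definition csum :: "nat \<Rightarrow> grid \<Rightarrow> real" where
  "csum N g = nsum3 g 1 1 1 N"

lemma int_interval_sum: "(\<Sum>i\<in>{1..int N}. f i) = (\<Sum>n<N. f (1 + int n))"
proof -
  have "{1..int N} = (\<lambda>n. 1 + int n) ` {..<N}"
  proof (intro set_eqI iffI)
    fix x :: int assume "x \<in> {1..int N}"
    then show "x \<in> (\<lambda>n. 1 + int n) ` {..<N}" by (intro image_eqI[of _ _ "nat (x - 1)"]) auto
  qed auto
  moreover have "inj_on (\<lambda>n::nat. 1 + int n) {..<N}" by (auto simp: inj_on_def)
  ultimately show ?thesis by (simp add: sum.reindex)
qed

lemma cells_sum: "(\<Sum>(i,j,k)\<in>cells N. g i j k) = csum N g"
  unfolding cells_def csum_def nsum3_def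
  by (simp add: sum.cartesian_product[symmetric] int_interval_sum)

lemma C_per_x: "f \<in> C_per N \<Longrightarrow> f (i + int N) j k = f i j k"
  and C_per_y: "f \<in> C_per N \<Longrightarrow> f i (j + int N) k = f i j k"
  and C_per_z: "f \<in> C_per N \<Longrightarrow> f i j (k + int N) = f i j k"
  by (auto simp: C_per_def)

lemma nsum3_per:
  assumes "g \<in> C_per N"
  shows "nsum3 g a1 a2 a3 N = csum N g"
proof -
  have A: "(\<Sum>n3<N. g i j (a3 + int n3)) = (\<Sum>n3<N. g i j (1 + int n3))" for i j
    by (rule persum1) (rule C_per_z[OF assms])
  have B: "(\<Sum>n2<N. \<Sum>n3<N. g i (a2 + int n2) (1 + int n3)) = (\<Sum>n2<N. \<Sum>n3<N. g i (1 + int n2) (1 + int n3))" for i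
    by (rule persum1[where g="\<lambda>j. \<Sum>n3<N. g i j (1 + int n3)"]) (simp add: C_per_y[OF assms])
  have C: "(\<Sum>n1<N. \<Sum>n2<N. \<Sum>n3<N. g (a1 + int n1) (1 + int n2) (1 + int n3)) = (\<Sum>n1<N. \<Sum>n2<N. \<Sum>n3<N. g (1 + int n1) (1 + int n2) (1 + int n3))"
    by (rule persum1[where g="\<lambda>i. \<Sum>n2<N. \<Sum>n3<N. g i (1 + int n2) (1 + int n3)"]) (simp add: C_per_x[OF assms])
  show ?thesis unfolding nsum3_def csum_def using A B C by simp
qed

lemma csum_shift:
  assumes "g \<in> C_per N"
  shows "csum N (\<lambda>i j k. g (i + b1) (j + b2) (k + b3)) = csum N g"
proof -
  have "csum N (\<lambda>i j k. g (i + b1) (j + b2) (k + b3)) = nsum3 g (1 + b1) (1 + b2) (1 + b3) N"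
    unfolding csum_def nsum3_def by (simp add: algebra_simps)
  then show ?thesis using nsum3_per[OF assms] by simp
qed

lemma csum_add: "csum N (\<lambda>i j k. f i j k + g i j k) = csum N f + csum N g"
  and csum_diff: "csum N (\<lambda>i j k. f i j k - g i j k) = csum N f - csum N g"
  and csum_cmult: "csum N (\<lambda>i j k. c * f i j k) = c * csum N f"
  and csum_const: "csum N (\<lambda>i j k. c) = real N ^ 3 * c"
  unfolding csum_def nsum3_def
  by (simp_all add: sum.distrib sum_subtractf sum_distrib_left power3_eq_cube)

lemma csum_mono: "(\<And>i j k. f i j k \<le> g i j k) \<Longrightarrow> csum N f \<le> csum N g"
  unfolding csum_def nsum3_def by (intro sum_mono) auto

lemma csum_nonneg: "(\<And>i j k. 0 \<le> f i j k) \<Longrightarrow> 0 \<le> csum N f"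
  unfolding csum_def nsum3_def by (intro sum_nonneg) auto

lemma C_per_diff: "f \<in> C_per N \<Longrightarrow> g \<in> C_per N \<Longrightarrow> (\<lambda>i j k. f i j k - g i j k) \<in> C_per N"
  by (simp add: C_per_def)

lemma cells_nonempty: "N \<ge> 1 \<Longrightarrow> (1,1,1) \<in> cells N"
  by (simp add: cells_def)

lemma finite_cells: "finite (cells N)" by (simp add: cells_def)

lemma sup_norm_ge: "(i,j,k) \<in> cells N \<Longrightarrow> \<bar>f i j k\<bar> \<le> sup_norm N f"
  unfolding sup_norm_def by (rule Max_ge) (auto simp: finite_cells image_iff intro!: bexI[of _ "(i,j,k)"])

lemma sup_norm_le: "N \<ge> 1 \<Longrightarrow> (\<And>i j k. (i,j,k) \<in> cells N \<Longrightarrow> \<bar>f i j k\<bar> \<le> B) \<Longrightarrow> sup_norm N f \<le> B"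
  unfolding sup_norm_def using cells_nonempty[of N]
  by (subst Max_le_iff) (auto simp: finite_cells)



definition dx :: "grid \<Rightarrow> grid" where "dx v i j k = v (i+1) j k - v i j k"
definition dy :: "grid \<Rightarrow> grid" where "dy v i j k = v i (j+1) k - v i j k"
definition dz :: "grid \<Rightarrow> grid" where "dz v i j k = v i j (k+1) - v i j k"

definition En :: "nat \<Rightarrow> grid \<Rightarrow> real" where
  "En N v = csum N (\<lambda>i j k. (dx v i j k)^2 + (dy v i j k)^2 + (dz v i j k)^2)"

definition EnD :: "nat \<Rightarrow> grid \<Rightarrow> grid \<Rightarrow> grid \<Rightarrow> grid \<Rightarrow> real" where
  "EnD N Dx Dy Dz v = csum N (\<lambda>i j k. Dx i j k * (dx v i j k)^2 + Dy i j k * (dy v i j k)^2 + Dz i j k * (dz v i j k)^2)"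

lemma C_per_shift: assumes "f \<in> C_per N" shows "(\<lambda>i j k. f (i+a) (j+b) (k+c)) \<in> C_per N"
proof -
  have "f (i + int N + a) (j+b) (k+c) = f (i+a) (j+b) (k+c)" for i j k
    using C_per_x[OF assms, of "i+a"] by (simp add: algebra_simps)
  moreover have "f (i + a) (j + int N + b) (k+c) = f (i+a) (j+b) (k+c)" for i j k
    using C_per_y[OF assms, of _ "j+b"] by (simp add: algebra_simps)
  moreover have "f (i + a) (j + b) (k + int N + c) = f (i+a) (j+b) (k+c)" for i j k
    using C_per_z[OF assms, of _ _ "k+c"] by (simp add: algebra_simps)
  ultimately show ?thesis by (simp add: C_per_def)
qed

lemma C_per_shift': assumes "f \<in> C_per N" shows "(\<lambda>i j k. f (i-a) j k) \<in> C_per N"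
  using C_per_shift[OF assms, of "-a" 0 0] by simp

lemma C_per_shift3: assumes "f \<in> C_per N" shows "(\<lambda>i j k. f (i-a) (j-b) (k-c)) \<in> C_per N"
  using C_per_shift[OF assms, of "-a" "-b" "-c"] by simp

lemma C_per_mult: "f \<in> C_per N \<Longrightarrow> g \<in> C_per N \<Longrightarrow> (\<lambda>i j k. f i j k * g i j k) \<in> C_per N"
  and C_per_add: "f \<in> C_per N \<Longrightarrow> g \<in> C_per N \<Longrightarrow> (\<lambda>i j k. f i j k + g i j k) \<in> C_per N"
  and C_per_minus: "f \<in> C_per N \<Longrightarrow> g \<in> C_per N \<Longrightarrow> (\<lambda>i j k. f i j k - g i j k) \<in> C_per N"
  and C_per_const: "(\<lambda>i j k. c) \<in> C_per N"
  and C_per_pow: "f \<in> C_per N \<Longrightarrow> (\<lambda>i j k. (f i j k)^n) \<in> C_per N"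
  by (simp_all add: C_per_def)

lemma C_per_dx: "v \<in> C_per N \<Longrightarrow> dx v \<in> C_per N"
  and C_per_dy: "v \<in> C_per N \<Longrightarrow> dy v \<in> C_per N"
  and C_per_dz: "v \<in> C_per N \<Longrightarrow> dz v \<in> C_per N"
proof -
  assume v: "v \<in> C_per N"
  show "dx v \<in> C_per N" unfolding dx_def[abs_def] by (intro C_per_minus v C_per_shift[OF v, of 1 0 0, simplified])
  show "dy v \<in> C_per N" unfolding dy_def[abs_def] by (intro C_per_minus v C_per_shift[OF v, of 0 1 0, simplified])
  show "dz v \<in> C_per N" unfolding dz_def[abs_def] by (intro C_per_minus v C_per_shift[OF v, of 0 0 1, simplified])
qed

lemma sbp_x:
  assumes v: "v \<in> C_per N" and D: "D \<in> C_per N"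
  shows "csum N (\<lambda>i j k. v i j k * (D i j k * dx v i j k - D (i-1) j k * dx v (i-1) j k))
       = - csum N (\<lambda>i j k. D i j k * (dx v i j k)^2)"
proof -
  let ?w = "\<lambda>i j k. v i j k * (D (i-1) j k * dx v (i-1) j k)"
  have wp: "?w \<in> C_per N"
    by (intro C_per_mult v C_per_shift'[where f="\<lambda>i j k. D i j k * dx v i j k"] D C_per_dx)
  have "csum N ?w = csum N (\<lambda>i j k. ?w (i+1) (j+0) (k+0))" using csum_shift[OF wp, of 1 0 0] by simp
  also have "\<dots> = csum N (\<lambda>i j k. v (i+1) j k * (D i j k * dx v i j k))" by simp
  finally have e: "csum N ?w = csum N (\<lambda>i j k. v (i+1) j k * (D i j k * dx v i j k))" .
  have "csum N (\<lambda>i j k. v i j k * (D i j k * dx v i j k - D (i-1) j k * dx v (i-1) j k))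
      = csum N (\<lambda>i j k. v i j k * (D i j k * dx v i j k)) - csum N ?w"
    by (simp add: csum_diff[symmetric] algebra_simps)
  also have "\<dots> = csum N (\<lambda>i j k. v i j k * (D i j k * dx v i j k) - v (i+1) j k * (D i j k * dx v i j k))"
    by (simp add: e csum_diff)
  also have "\<dots> = csum N (\<lambda>i j k. (-1) * (D i j k * (dx v i j k)^2))"
    by (rule arg_cong[where f="csum N"]) (auto simp: fun_eq_iff dx_def power2_eq_square algebra_simps)
  also have "\<dots> = - csum N (\<lambda>i j k. D i j k * (dx v i j k)^2)"
    by (simp only: csum_cmult)
  finally show ?thesis .
qed


lemma sbp_y:
  assumes v: "v \<in> C_per N" and D: "D \<in> C_per N"
  shows "csum N (\<lambda>i j k. v i j k * (D i j k * dy v i j k - D i (j-1) k * dy v i (j-1) k))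
       = - csum N (\<lambda>i j k. D i j k * (dy v i j k)^2)"
proof -
  let ?w = "\<lambda>i j k. v i j k * (D i (j-1) k * dy v i (j-1) k)"
  have wp: "?w \<in> C_per N"
    using C_per_mult[OF v C_per_shift3[OF C_per_mult[OF D C_per_dy[OF v]], of 0 1 0]] by simp
  have "csum N ?w = csum N (\<lambda>i j k. ?w (i+0) (j+1) (k+0))" using csum_shift[OF wp, of 0 1 0] by simp
  also have "\<dots> = csum N (\<lambda>i j k. v i (j+1) k * (D i j k * dy v i j k))" by simp
  finally have e: "csum N ?w = csum N (\<lambda>i j k. v i (j+1) k * (D i j k * dy v i j k))" .
  have "csum N (\<lambda>i j k. v i j k * (D i j k * dy v i j k - D i (j-1) k * dy v i (j-1) k))
      = csum N (\<lambda>i j k. v i j k * (D i j k * dy v i j k)) - csum N ?w"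
    by (simp add: csum_diff[symmetric] algebra_simps)
  also have "\<dots> = csum N (\<lambda>i j k. v i j k * (D i j k * dy v i j k) - v i (j+1) k * (D i j k * dy v i j k))"
    by (simp add: e csum_diff)
  also have "\<dots> = csum N (\<lambda>i j k. (-1) * (D i j k * (dy v i j k)^2))"
    by (rule arg_cong[where f="csum N"]) (auto simp: fun_eq_iff dy_def power2_eq_square algebra_simps)
  also have "\<dots> = - csum N (\<lambda>i j k. D i j k * (dy v i j k)^2)"
    by (simp only: csum_cmult)
  finally show ?thesis .
qed

lemma sbp_z:
  assumes v: "v \<in> C_per N" and D: "D \<in> C_per N"
  shows "csum N (\<lambda>i j k. v i j k * (D i j k * dz v i j k - D i j (k-1) * dz v i j (k-1)))
       = - csum N (\<lambda>i j k. D i j k * (dz v i j k)^2)"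
proof -
  let ?w = "\<lambda>i j k. v i j k * (D i j (k-1) * dz v i j (k-1))"
  have wp: "?w \<in> C_per N"
    using C_per_mult[OF v C_per_shift3[OF C_per_mult[OF D C_per_dz[OF v]], of 0 0 1]] by simp
  have "csum N ?w = csum N (\<lambda>i j k. ?w (i+0) (j+0) (k+1))" using csum_shift[OF wp, of 0 0 1] by simp
  also have "\<dots> = csum N (\<lambda>i j k. v i j (k+1) * (D i j k * dz v i j k))" by simp
  finally have e: "csum N ?w = csum N (\<lambda>i j k. v i j (k+1) * (D i j k * dz v i j k))" .
  have "csum N (\<lambda>i j k. v i j k * (D i j k * dz v i j k - D i j (k-1) * dz v i j (k-1)))
      = csum N (\<lambda>i j k. v i j k * (D i j k * dz v i j k)) - csum N ?w"
    by (simp add: csum_diff[symmetric] algebra_simps)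
  also have "\<dots> = csum N (\<lambda>i j k. v i j k * (D i j k * dz v i j k) - v i j (k+1) * (D i j k * dz v i j k))"
    by (simp add: e csum_diff)
  also have "\<dots> = csum N (\<lambda>i j k. (-1) * (D i j k * (dz v i j k)^2))"
    by (rule arg_cong[where f="csum N"]) (auto simp: fun_eq_iff dz_def power2_eq_square algebra_simps)
  also have "\<dots> = - csum N (\<lambda>i j k. D i j k * (dz v i j k)^2)"
    by (simp only: csum_cmult)
  finally show ?thesis .
qed

lemma div_grad_alt: "div_grad h Dx Dy Dz v i j k =
   ((Dx i j k * dx v i j k - Dx (i-1) j k * dx v (i-1) j k)
  + (Dy i j k * dy v i j k - Dy i (j-1) k * dy v i (j-1) k)
  + (Dz i j k * dz v i j k - Dz i j (k-1) * dz v i j (k-1))) / h^2"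
  unfolding div_grad_def dx_def dy_def dz_def by simp

lemma energy_id:
  assumes v: "v \<in> C_per N" and Dx: "Dx \<in> C_per N" and Dy: "Dy \<in> C_per N" and Dz: "Dz \<in> C_per N"
  shows "csum N (\<lambda>i j k. v i j k * div_grad h Dx Dy Dz v i j k) = - EnD N Dx Dy Dz v / h^2"
proof -
  have "csum N (\<lambda>i j k. v i j k * div_grad h Dx Dy Dz v i j k)
    = csum N (\<lambda>i j k. (1/h^2) * (v i j k * (Dx i j k * dx v i j k - Dx (i-1) j k * dx v (i-1) j k)
       + v i j k * (Dy i j k * dy v i j k - Dy i (j-1) k * dy v i (j-1) k)
       + v i j k * (Dz i j k * dz v i j k - Dz i j (k-1) * dz v i j (k-1))))"
    unfolding div_grad_alt by (rule arg_cong[where f="csum N"]) (simp add: fun_eq_iff field_simps)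
  also have "\<dots> = (1/h^2) * (- csum N (\<lambda>i j k. Dx i j k * (dx v i j k)^2)
     - csum N (\<lambda>i j k. Dy i j k * (dy v i j k)^2) - csum N (\<lambda>i j k. Dz i j k * (dz v i j k)^2))"
    by (simp only: csum_cmult csum_add sbp_x[OF v Dx] sbp_y[OF v Dy] sbp_z[OF v Dz]) simp
  also have "\<dots> = - EnD N Dx Dy Dz v / h^2"
    unfolding EnD_def by (simp add: csum_add)
  finally show ?thesis .
qed

lemma csum_tele:
  assumes "g \<in> C_per N"
  shows "csum N (\<lambda>i j k. g i j k - g (i-1) j k) = 0"
    and "csum N (\<lambda>i j k. g i j k - g i (j-1) k) = 0"
    and "csum N (\<lambda>i j k. g i j k - g i j (k-1)) = 0"
  using csum_shift[OF assms, of "-1" 0 0] csum_shift[OF assms, of 0 "-1" 0] csum_shift[OF assms, of 0 0 "-1"]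
  by (simp_all add: csum_diff)

lemma csum_div_grad:
  assumes v: "v \<in> C_per N" and Dx: "Dx \<in> C_per N" and Dy: "Dy \<in> C_per N" and Dz: "Dz \<in> C_per N"
  shows "csum N (div_grad h Dx Dy Dz v) = 0"
proof -
  have "csum N (div_grad h Dx Dy Dz v) = csum N (\<lambda>i j k. (1/h^2) * ((Dx i j k * dx v i j k - Dx (i-1) j k * dx v (i-1) j k)
  + (Dy i j k * dy v i j k - Dy i (j-1) k * dy v i (j-1) k)
  + (Dz i j k * dz v i j k - Dz i j (k-1) * dz v i j (k-1))))"
    by (rule arg_cong[where f="csum N"]) (simp add: fun_eq_iff div_grad_alt)
  also have "\<dots> = 0"
    using csum_tele(1)[OF C_per_mult[OF Dx C_per_dx[OF v]]] csum_tele(2)[OF C_per_mult[OF Dy C_per_dy[OF v]]]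
      csum_tele(3)[OF C_per_mult[OF Dz C_per_dz[OF v]]]
    by (simp only: csum_cmult csum_add) simp
  finally show ?thesis .
qed



lemma line1:
  fixes f :: "nat \<Rightarrow> real"
  assumes "n < s" "m < s"
  shows "(f n - f m)^2 \<le> real s * (\<Sum>t<s. (f (t+1) - f t)^2)"
proof -
  have key: "(f b - f a)^2 \<le> real s * (\<Sum>t<s. (f (t+1) - f t)^2)" if "a \<le> b" "b < s" for a b
  proof -
    have "f b - f a = (\<Sum>t\<in>{a..<b}. f (t+1) - f t)"
      using that(1) by (simp add: sum_Suc_diff')
    then have "(f b - f a)^2 \<le> real (card {a..<b}) * (\<Sum>t\<in>{a..<b}. (f (t+1) - f t)^2)"
      using cs_sum[of "{a..<b}" "\<lambda>t. f (t+1) - f t"] by simp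
    also have "\<dots> \<le> real s * (\<Sum>t<s. (f (t+1) - f t)^2)"
    proof (rule mult_mono)
      show "real (card {a..<b}) \<le> real s" using that by simp
      show "(\<Sum>t\<in>{a..<b}. (f (t+1) - f t)^2) \<le> (\<Sum>t<s. (f (t+1) - f t)^2)"
        using that by (intro sum_mono2) auto
    qed (auto intro: sum_nonneg)
    finally show ?thesis .
  qed
  show ?thesis
  proof (cases "m \<le> n")
    case True then show ?thesis using key[of m n] assms by simp
  next
    case False then show ?thesis using key[of n m] assms by (simp add: power2_commute)
  qed
qed



lemma poinc_nat:
  fixes u :: "nat \<Rightarrow> nat \<Rightarrow> nat \<Rightarrow> real"
  shows "(\<Sum>p1<s. \<Sum>p2<s. \<Sum>p3<s. \<Sum>q1<s. \<Sum>q2<s. \<Sum>q3<s. (u p1 p2 p3 - u q1 q2 q3)^2)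
    \<le> 3 * real s ^ 5 * (\<Sum>n1<s. \<Sum>n2<s. \<Sum>n3<s. (u (n1+1) n2 n3 - u n1 n2 n3)^2
          + (u n1 (n2+1) n3 - u n1 n2 n3)^2 + (u n1 n2 (n3+1) - u n1 n2 n3)^2)"
proof -
  define Lx where "Lx p2 p3 = (\<Sum>t<s. (u (t+1) p2 p3 - u t p2 p3)^2)" for p2 p3
  define Ly where "Ly q1 p3 = (\<Sum>t<s. (u q1 (t+1) p3 - u q1 t p3)^2)" for q1 p3
  define Lz where "Lz q1 q2 = (\<Sum>t<s. (u q1 q2 (t+1) - u q1 q2 t)^2)" for q1 q2
  have pt: "(u p1 p2 p3 - u q1 q2 q3)^2 \<le> 3 * real s * (Lx p2 p3 + Ly q1 p3 + Lz q1 q2)"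
    if "p1 < s" "p2 < s" "p3 < s" "q1 < s" "q2 < s" "q3 < s" for p1 p2 p3 q1 q2 q3
  proof -
    define X where "X = u p1 p2 p3 - u q1 p2 p3"
    define Y where "Y = u q1 p2 p3 - u q1 q2 p3"
    define Z where "Z = u q1 q2 p3 - u q1 q2 q3"
    have "(u p1 p2 p3 - u q1 q2 q3)^2 = (X + Y + Z)^2" by (simp add: X_def Y_def Z_def)
    also have "\<dots> \<le> 3 * (X^2 + Y^2 + Z^2)"
      using cs_sum[of "{0::nat,1,2}" "\<lambda>i. if i = 0 then X else if i = 1 then Y else Z"] by (simp add: add.assoc)
    moreover have "X^2 \<le> real s * Lx p2 p3"
      unfolding X_def Lx_def using line1[of p1 s q1 "\<lambda>t. u t p2 p3"] that by simp
    moreover have "Y^2 \<le> real s * Ly q1 p3"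
      unfolding Y_def Ly_def using line1[of p2 s q2 "\<lambda>t. u q1 t p3"] that by simp
    moreover have "Z^2 \<le> real s * Lz q1 q2"
      unfolding Z_def Lz_def using line1[of p3 s q3 "\<lambda>t. u q1 q2 t"] that by simp
    ultimately show ?thesis by (simp add: algebra_simps)
  qed
  have "(\<Sum>p1<s. \<Sum>p2<s. \<Sum>p3<s. \<Sum>q1<s. \<Sum>q2<s. \<Sum>q3<s. (u p1 p2 p3 - u q1 q2 q3)^2)
     \<le> (\<Sum>p1<s. \<Sum>p2<s. \<Sum>p3<s. \<Sum>q1<s. \<Sum>q2<s. \<Sum>q3<s. 3 * real s * (Lx p2 p3 + Ly q1 p3 + Lz q1 q2))"
    by (intro sum_mono pt) auto
  also have "\<dots> = 3 * real s * (real s ^ 4 * (\<Sum>p2<s. \<Sum>p3<s. Lx p2 p3) + real s ^ 4 * (\<Sum>q1<s. \<Sum>p3<s. Ly q1 p3)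
       + real s ^ 4 * (\<Sum>q1<s. \<Sum>q2<s. Lz q1 q2))"
  proof -
    have swap: "(\<Sum>p3<s. \<Sum>q1<s. Ly q1 p3) = (\<Sum>q1<s. \<Sum>p3<s. Ly q1 p3)" by (rule sum.swap)
    show ?thesis
      by (simp add: sum.distrib sum_distrib_left[symmetric] swap) (simp add: algebra_simps eval_nat_numeral)
  qed
  also have "\<dots> = 3 * real s ^ 5 * ((\<Sum>p2<s. \<Sum>p3<s. Lx p2 p3) + (\<Sum>q1<s. \<Sum>p3<s. Ly q1 p3)
       + (\<Sum>q1<s. \<Sum>q2<s. Lz q1 q2))"
    by (simp add: algebra_simps eval_nat_numeral)
  also have "(\<Sum>p2<s. \<Sum>p3<s. Lx p2 p3) = (\<Sum>n1<s. \<Sum>n2<s. \<Sum>n3<s. (u (n1+1) n2 n3 - u n1 n2 n3)^2)"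
  proof -
    have "(\<Sum>p2<s. \<Sum>p3<s. Lx p2 p3) = (\<Sum>p2<s. \<Sum>t<s. \<Sum>p3<s. (u (t+1) p2 p3 - u t p2 p3)^2)"
      unfolding Lx_def by (rule sum.cong[OF refl]) (rule sum.swap)
    also have "\<dots> = (\<Sum>t<s. \<Sum>p2<s. \<Sum>p3<s. (u (t+1) p2 p3 - u t p2 p3)^2)"
      by (rule sum.swap)
    finally show ?thesis .
  qed
  also have "(\<Sum>q1<s. \<Sum>p3<s. Ly q1 p3) = (\<Sum>n1<s. \<Sum>n2<s. \<Sum>n3<s. (u n1 (n2+1) n3 - u n1 n2 n3)^2)"
    unfolding Ly_def by (rule sum.cong[OF refl]) (rule sum.swap)
  also have "(\<Sum>q1<s. \<Sum>q2<s. Lz q1 q2) = (\<Sum>n1<s. \<Sum>n2<s. \<Sum>n3<s. (u n1 n2 (n3+1) - u n1 n2 n3)^2)"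
    unfolding Lz_def by simp
  finally show ?thesis by (simp add: sum.distrib)
qed



definition bx :: "nat \<Rightarrow> (nat \<times> nat \<times> nat) set" where
  "bx s = {..<s} \<times> {..<s} \<times> {..<s}"

lemma finite_bx: "finite (bx s)" by (simp add: bx_def)
lemma card_bx: "card (bx s) = s ^ 3" by (simp add: bx_def card_cartesian_product power3_eq_cube)

lemma nest: "(\<Sum>q\<in>bx s. H q) = (\<Sum>n1<s. \<Sum>n2<s. \<Sum>n3<s. H (n1,n2,n3))"
  unfolding bx_def by (simp add: sum.cartesian_product')

lemma bx_mono: "s' \<le> s \<Longrightarrow> bx s' \<subseteq> bx s" by (auto simp: bx_def)

definition vv :: "grid \<Rightarrow> int \<Rightarrow> int \<Rightarrow> int \<Rightarrow> nat \<times> nat \<times> nat \<Rightarrow> real" where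
  "vv v a1 a2 a3 p = (case p of (n1,n2,n3) \<Rightarrow> v (a1 + int n1) (a2 + int n2) (a3 + int n3))"

lemma nested_mono:
  fixes F :: "nat \<Rightarrow> nat \<Rightarrow> nat \<Rightarrow> real"
  assumes "\<And>x y z. 0 \<le> F x y z" "s \<le> N"
  shows "(\<Sum>n1<s. \<Sum>n2<s. \<Sum>n3<s. F n1 n2 n3) \<le> (\<Sum>n1<N. \<Sum>n2<N. \<Sum>n3<N. F n1 n2 n3)"
proof -
  have inner: "sum (F a b) {..<s} \<le> sum (F a b) {..<N}" for a b
    by (rule sum_mono2) (use assms in auto)
  have "(\<Sum>n1<s. \<Sum>n2<s. \<Sum>n3<s. F n1 n2 n3) \<le> (\<Sum>n1<s. \<Sum>n2<s. \<Sum>n3<N. F n1 n2 n3)"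
    by (intro sum_mono inner)
  also have "\<dots> \<le> (\<Sum>n1<s. \<Sum>n2<N. \<Sum>n3<N. F n1 n2 n3)"
    by (intro sum_mono, intro sum_mono2 sum_nonneg) (use assms in auto)
  also have "\<dots> \<le> (\<Sum>n1<N. \<Sum>n2<N. \<Sum>n3<N. F n1 n2 n3)"
    by (intro sum_mono2 sum_nonneg) (use assms in auto)
  finally show ?thesis .
qed

lemma En_per:
  assumes v: "v \<in> C_per N"
  shows "(\<lambda>i j k. (dx v i j k)^2 + (dy v i j k)^2 + (dz v i j k)^2) \<in> C_per N"
  by (intro C_per_add C_per_pow C_per_dx C_per_dy C_per_dz v)

lemma box_poinc:
  assumes v: "v \<in> C_per N" and sN: "s \<le> N"
  shows "(\<Sum>p\<in>bx s. \<Sum>q\<in>bx s. (vv v a1 a2 a3 p - vv v a1 a2 a3 q)^2) \<le> 3 * real s ^ 5 * En N v"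
proof -
  define u where "u n1 n2 n3 = v (a1 + int n1) (a2 + int n2) (a3 + int n3)" for n1 n2 n3
  define G where "G i j k = (dx v i j k)^2 + (dy v i j k)^2 + (dz v i j k)^2" for i j k
  have "(\<Sum>p\<in>bx s. \<Sum>q\<in>bx s. (vv v a1 a2 a3 p - vv v a1 a2 a3 q)^2)
      = (\<Sum>p1<s. \<Sum>p2<s. \<Sum>p3<s. \<Sum>q1<s. \<Sum>q2<s. \<Sum>q3<s. (u p1 p2 p3 - u q1 q2 q3)^2)"
    by (simp add: nest vv_def u_def)
  also have "\<dots> \<le> 3 * real s ^ 5 * (\<Sum>n1<s. \<Sum>n2<s. \<Sum>n3<s. (u (n1+1) n2 n3 - u n1 n2 n3)^2
          + (u n1 (n2+1) n3 - u n1 n2 n3)^2 + (u n1 n2 (n3+1) - u n1 n2 n3)^2)"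
    by (rule poinc_nat)
  also have "(\<Sum>n1<s. \<Sum>n2<s. \<Sum>n3<s. (u (n1+1) n2 n3 - u n1 n2 n3)^2
          + (u n1 (n2+1) n3 - u n1 n2 n3)^2 + (u n1 n2 (n3+1) - u n1 n2 n3)^2) \<le> En N v"
  proof -
    have "(\<Sum>n1<s. \<Sum>n2<s. \<Sum>n3<s. (u (n1+1) n2 n3 - u n1 n2 n3)^2
          + (u n1 (n2+1) n3 - u n1 n2 n3)^2 + (u n1 n2 (n3+1) - u n1 n2 n3)^2)
     = (\<Sum>n1<s. \<Sum>n2<s. \<Sum>n3<s. G (a1 + int n1) (a2 + int n2) (a3 + int n3))"
      by (simp add: u_def G_def dx_def dy_def dz_def algebra_simps)
    also have "\<dots> \<le> (\<Sum>n1<N. \<Sum>n2<N. \<Sum>n3<N. G (a1 + int n1) (a2 + int n2) (a3 + int n3))"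
      by (rule nested_mono[OF _ sN]) (simp add: G_def)
    also have "\<dots> = En N v"
      using nsum3_per[OF En_per[OF v], of a1 a2 a3] unfolding nsum3_def En_def G_def by simp
    finally show ?thesis .
  qed
  finally show ?thesis by (simp add: mult_left_mono)
qed



definition bavg :: "grid \<Rightarrow> int \<Rightarrow> int \<Rightarrow> int \<Rightarrow> nat \<Rightarrow> real" where
  "bavg v a1 a2 a3 s = (\<Sum>p\<in>bx s. vv v a1 a2 a3 p) / real s ^ 3"

lemma En_nonneg: "0 \<le> En N v"
  unfolding En_def by (rule csum_nonneg) simp

lemma var_bound:
  assumes v: "v \<in> C_per N" and s1: "1 \<le> s" and sN: "s \<le> N"
  shows "(\<Sum>p\<in>bx s. (vv v a1 a2 a3 p - bavg v a1 a2 a3 s)^2) \<le> 3 * real s ^ 2 * En N v"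
proof -
  let ?w = "vv v a1 a2 a3"
  define n where "n = real s ^ 3"
  have npos: "n > 0" using s1 by (simp add: n_def)
  have pt: "(?w p - bavg v a1 a2 a3 s)^2 \<le> (\<Sum>q\<in>bx s. (?w p - ?w q)^2) / n" for p
  proof -
    have "(\<Sum>q\<in>bx s. ?w p - ?w q) = n * ?w p - (\<Sum>q\<in>bx s. ?w q)"
      by (simp add: sum_subtractf card_bx n_def)
    then have "?w p - bavg v a1 a2 a3 s = (\<Sum>q\<in>bx s. ?w p - ?w q) / n"
      using npos by (simp add: bavg_def n_def[symmetric] field_simps)
    then have "(?w p - bavg v a1 a2 a3 s)^2 = (\<Sum>q\<in>bx s. ?w p - ?w q)^2 / n^2"
      by (simp add: power_divide)
    also have "\<dots> \<le> (n * (\<Sum>q\<in>bx s. (?w p - ?w q)^2)) / n^2"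
      using cs_sum[OF finite_bx, of "\<lambda>q. ?w p - ?w q" s]
      by (intro divide_right_mono) (simp_all add: card_bx n_def)
    also have "\<dots> = (\<Sum>q\<in>bx s. (?w p - ?w q)^2) / n"
      using npos by (simp add: power2_eq_square)
    finally show ?thesis .
  qed
  have "(\<Sum>p\<in>bx s. (?w p - bavg v a1 a2 a3 s)^2) \<le> (\<Sum>p\<in>bx s. (\<Sum>q\<in>bx s. (?w p - ?w q)^2) / n)"
    by (intro sum_mono pt)
  also have "\<dots> = (\<Sum>p\<in>bx s. \<Sum>q\<in>bx s. (?w p - ?w q)^2) / n"
    by (simp add: sum_divide_distrib)
  also have "\<dots> \<le> (3 * real s ^ 5 * En N v) / n"
    by (intro divide_right_mono box_poinc[OF v sN]) (use npos in simp)
  also have "\<dots> = 3 * real s ^ 2 * En N v"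
    using npos by (simp add: n_def field_simps eval_nat_numeral)
  finally show ?thesis .
qed

lemma step_bound:
  assumes v: "v \<in> C_per N" and s1: "1 \<le> s'" and ss: "s' \<le> s" and s2: "s \<le> 2 * s'" and sN: "s \<le> N"
  shows "(bavg v a1 a2 a3 s' - bavg v a1 a2 a3 s)^2 \<le> 24 * En N v / real s"
proof -
  let ?w = "vv v a1 a2 a3"
  define \<mu> where "\<mu> = bavg v a1 a2 a3 s"
  define n' where "n' = real s' ^ 3"
  have npos: "n' > 0" using s1 by (simp add: n'_def)
  have "bavg v a1 a2 a3 s' - \<mu> = (\<Sum>p\<in>bx s'. ?w p - \<mu>) / n'"
    using npos by (simp add: bavg_def sum_subtractf card_bx n'_def[symmetric] field_simps)
  then have "(bavg v a1 a2 a3 s' - \<mu>)^2 = (\<Sum>p\<in>bx s'. ?w p - \<mu>)^2 / n'^2"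
    by (simp add: power_divide)
  also have "\<dots> \<le> (n' * (\<Sum>p\<in>bx s'. (?w p - \<mu>)^2)) / n'^2"
    using cs_sum[OF finite_bx, of "\<lambda>p. ?w p - \<mu>" s']
    by (intro divide_right_mono) (simp_all add: card_bx n'_def)
  also have "\<dots> = (\<Sum>p\<in>bx s'. (?w p - \<mu>)^2) / n'"
    using npos by (simp add: power2_eq_square)
  also have "\<dots> \<le> (\<Sum>p\<in>bx s. (?w p - \<mu>)^2) / n'"
    by (intro divide_right_mono sum_mono2 finite_bx bx_mono ss) (use npos in auto)
  also have "\<dots> \<le> (3 * real s ^ 2 * En N v) / n'"
    unfolding \<mu>_def by (intro divide_right_mono var_bound[OF v _ sN]) (use s1 ss npos in auto)
  also have "\<dots> \<le> 24 * En N v / real s"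
  proof -
    have sp: "real s > 0" using s1 ss by simp
    have "real s ^ 3 \<le> (2 * real s') ^ 3"
      using s2 by (intro power_mono) (simp_all add: of_nat_mono[of s "2*s'", simplified])
    then have c: "real s ^ 3 \<le> 8 * n'" by (simp add: n'_def power_mult_distrib)
    have "3 * real s ^ 2 * En N v * real s = 3 * real s ^ 3 * En N v" by (simp add: eval_nat_numeral)
    also have "\<dots> \<le> 3 * (8 * n') * En N v" using c En_nonneg[of N v] by (intro mult_right_mono) auto
    finally have "3 * real s ^ 2 * En N v * real s \<le> 24 * En N v * n'" by simp
    then show ?thesis using sp npos by (simp add: divide_le_eq le_divide_eq field_simps)
  qed
  finally show ?thesis unfolding \<mu>_def .
qed



lemma bavg1: "bavg v a1 a2 a3 1 = v a1 a2 a3"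
  unfolding bavg_def by (simp add: nest vv_def)

lemma bavgN: "v \<in> C_per N \<Longrightarrow> bavg v a1 a2 a3 N = csum N v / real N ^ 3"
  unfolding bavg_def using nsum3_per[of v N a1 a2 a3] by (simp add: nest vv_def nsum3_def)

definition sk :: "nat \<Rightarrow> nat \<Rightarrow> nat" where "sk N k = min (2^k) N"

lemma chain:
  assumes v: "v \<in> C_per N" and N1: "1 \<le> N"
  shows "\<bar>v a1 a2 a3 - bavg v a1 a2 a3 (sk N k)\<bar>
     \<le> sqrt (24 * En N v) * (\<Sum>j<k. (1 / sqrt 2) ^ j)"
proof (induction k)
  case 0
  have "sk N 0 = 1" using N1 by (simp add: sk_def)
  then show ?case using bavg1[of v a1 a2 a3] by simp
next
  case (Suc k)
  let ?e = "sqrt (24 * En N v)"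
  let ?D = "bavg v a1 a2 a3 (sk N k) - bavg v a1 a2 a3 (sk N (Suc k))"
  have eq: "\<bar>?D\<bar> \<le> ?e * (1 / sqrt 2) ^ k"
  proof (cases "sk N k = sk N (Suc k)")
    case True then show ?thesis using En_nonneg[of N v] by simp
  next
    case False
    have lt: "2 ^ k < N"
    proof (rule ccontr)
      assume "\<not> 2 ^ k < N"
      then have "N \<le> 2 ^ k" "N \<le> 2 ^ Suc k" by auto
      then have "sk N k = N" "sk N (Suc k) = N" by (auto simp: sk_def min_def)
      then show False using False by simp
    qed
    then have skk: "sk N k = 2 ^ k" by (simp add: sk_def)
    have le1: "sk N k \<le> sk N (Suc k)" by (auto simp: sk_def min_def)
    have ge: "2 ^ k \<le> sk N (Suc k)" using lt by (auto simp: sk_def min_def)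
    have "?D^2 \<le> 24 * En N v / real (sk N (Suc k))"
      by (rule step_bound[OF v]) (use skk le1 in \<open>auto simp: sk_def min_def\<close>)
    also have "\<dots> \<le> 24 * En N v / 2 ^ k"
      using ge En_nonneg[of N v]
    proof -
      have g2: "(2::real) ^ k \<le> real (sk N (Suc k))"
        using ge by (metis of_nat_le_iff of_nat_numeral of_nat_power)
      have "(0::nat) < 2 ^ k" by simp
      then have sp: "0 < real (sk N (Suc k))" using ge by linarith
      have p2: "(0::real) < 2 ^ k" by simp
      show ?thesis using g2 En_nonneg[of N v]
        by (intro divide_left_mono) (use sp p2 in \<open>auto intro: mult_pos_pos\<close>)
    qed
    finally have D2: "?D^2 \<le> 24 * En N v / 2 ^ k" .
    have "\<bar>?D\<bar> = sqrt (?D^2)" by simp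
    also have "\<dots> \<le> sqrt (24 * En N v / 2 ^ k)" using D2 by (rule real_sqrt_le_mono)
    also have "\<dots> = ?e * (1 / sqrt 2) ^ k"
      by (simp add: divide_inverse real_sqrt_mult real_sqrt_inverse real_sqrt_power power_inverse)
    finally show ?thesis .
  qed
  have "\<bar>v a1 a2 a3 - bavg v a1 a2 a3 (sk N (Suc k))\<bar>
      \<le> \<bar>v a1 a2 a3 - bavg v a1 a2 a3 (sk N k)\<bar> + \<bar>?D\<bar>" by linarith
  also have "\<dots> \<le> ?e * (\<Sum>j<k. (1 / sqrt 2) ^ j) + ?e * (1 / sqrt 2) ^ k"
    using Suc.IH eq by linarith
  finally show ?case by (simp add: algebra_simps)
qed

lemma linf_bound:
  assumes v: "v \<in> C_per N" and N1: "1 \<le> N" and z: "csum N v = 0"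
  shows "\<bar>v a1 a2 a3\<bar> \<le> 4 * sqrt (24 * En N v)"
proof -
  let ?q = "1 / sqrt 2 :: real"
  have skN: "sk N N = N" using less_exp[of N] by (simp add: sk_def)
  have c: "\<bar>v a1 a2 a3\<bar> \<le> sqrt (24 * En N v) * (\<Sum>j<N. ?q ^ j)"
    using chain[OF v N1, of a1 a2 a3 N] by (simp add: skN bavgN[OF v] z)
  have s2: "4/3 \<le> sqrt (2::real)" by (rule real_le_rsqrt) (simp add: power2_eq_square)
  have q1: "?q \<le> 3/4" using s2 by (simp add: divide_le_eq field_simps)
  have qpos: "0 \<le> ?q" by simp
  have "(\<Sum>j<N. ?q ^ j) = (1 - ?q ^ N) / (1 - ?q)"
    using q1 by (subst sum_gp_strict) auto
  also have "\<dots> \<le> 1 / (1 - ?q)"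
    using q1 qpos by (intro divide_right_mono) auto
  also have "\<dots> \<le> 4" using q1 by (simp add: divide_le_eq)
  finally have g: "(\<Sum>j<N. ?q ^ j) \<le> 4" .
  have "sqrt (24 * En N v) * (\<Sum>j<N. ?q ^ j) \<le> sqrt (24 * En N v) * 4"
    by (intro mult_left_mono g) (simp add: En_nonneg)
  then show ?thesis using c by simp
qed



lemma csum_sq_cells: "csum N g = (\<Sum>(i,j,k)\<in>cells N. g i j k)"
  by (simp add: cells_sum)

lemma card_cells: "card (cells N) = N ^ 3"
  by (simp add: cells_def card_cartesian_product power3_eq_cube)

lemma global_poinc:
  assumes v: "v \<in> C_per N" and N1: "1 \<le> N" and z: "csum N v = 0"
  shows "csum N (\<lambda>i j k. (v i j k)^2) \<le> 3 * real N ^ 2 * En N v"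
proof -
  have "bavg v 1 1 1 N = 0" using bavgN[OF v] z by simp
  then have "(\<Sum>p\<in>bx N. (vv v 1 1 1 p)^2) \<le> 3 * real N ^ 2 * En N v"
    using var_bound[OF v N1 order_refl, of 1 1 1] by simp
  moreover have "(\<Sum>p\<in>bx N. (vv v 1 1 1 p)^2) = csum N (\<lambda>i j k. (v i j k)^2)"
    by (simp add: nest vv_def csum_def nsum3_def)
  ultimately show ?thesis by simp
qed

lemma EnD_ge:
  assumes "M0 > 0" "\<And>i j k. Dx i j k \<ge> M0 \<and> Dy i j k \<ge> M0 \<and> Dz i j k \<ge> M0"
  shows "M0 * En N v \<le> EnD N Dx Dy Dz v"
proof -
  have "M0 * En N v = csum N (\<lambda>i j k. M0 * (dx v i j k)^2 + M0 * (dy v i j k)^2 + M0 * (dz v i j k)^2)"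
    unfolding En_def by (simp add: csum_cmult[symmetric] algebra_simps)
  also have "\<dots> \<le> EnD N Dx Dy Dz v"
    unfolding EnD_def
  proof (rule csum_mono)
    fix i j k
    have "M0 * (dx v i j k)^2 \<le> Dx i j k * (dx v i j k)^2" using assms(2)[of i j k] by (intro mult_right_mono) auto
    moreover have "M0 * (dy v i j k)^2 \<le> Dy i j k * (dy v i j k)^2" using assms(2)[of i j k] by (intro mult_right_mono) auto
    moreover have "M0 * (dz v i j k)^2 \<le> Dz i j k * (dz v i j k)^2" using assms(2)[of i j k] by (intro mult_right_mono) auto
    ultimately show "M0 * (dx v i j k)^2 + M0 * (dy v i j k)^2 + M0 * (dz v i j k)^2
       \<le> Dx i j k * (dx v i j k)^2 + Dy i j k * (dy v i j k)^2 + Dz i j k * (dz v i j k)^2" by linarith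
  qed
  finally show ?thesis .
qed

lemma energy_bound:
  assumes v: "v \<in> C_per N" and N1: "1 \<le> N" and z: "csum N v = 0"
    and Dx: "Dx \<in> C_per N" and Dy: "Dy \<in> C_per N" and Dz: "Dz \<in> C_per N"
    and M0: "M0 > 0" and Dge: "\<And>i j k. Dx i j k \<ge> M0 \<and> Dy i j k \<ge> M0 \<and> Dz i j k \<ge> M0"
    and h: "h > 0"
    and eq: "\<And>i j k. - div_grad h Dx Dy Dz v i j k = \<psi> i j k"
    and K: "\<And>i j k. (i,j,k) \<in> cells N \<Longrightarrow> \<bar>\<psi> i j k\<bar> \<le> K"
  shows "M0^2 * En N v \<le> 3 * h^4 * K^2 * real N ^ 5"
proof -
  have K0: "0 \<le> K" using K[of 1 1 1] cells_nonempty[OF N1] by fastforce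
  have "EnD N Dx Dy Dz v = (-(h^2)) * csum N (\<lambda>i j k. v i j k * div_grad h Dx Dy Dz v i j k)"
    using energy_id[OF v Dx Dy Dz, of h] h by simp
  also have "\<dots> = h^2 * csum N (\<lambda>i j k. v i j k * \<psi> i j k)"
  proof -
    have "csum N (\<lambda>i j k. v i j k * \<psi> i j k) = csum N (\<lambda>i j k. (-1) * (v i j k * div_grad h Dx Dy Dz v i j k))"
      by (rule arg_cong[where f="csum N"]) (simp add: fun_eq_iff eq[symmetric])
    then show ?thesis by (simp only: csum_cmult)
  qed
  finally have e1: "EnD N Dx Dy Dz v = h^2 * csum N (\<lambda>i j k. v i j k * \<psi> i j k)" .
  define A where "A = csum N (\<lambda>i j k. \<bar>v i j k\<bar>)"
  have "csum N (\<lambda>i j k. v i j k * \<psi> i j k) \<le> (\<Sum>(i,j,k)\<in>cells N. K * \<bar>v i j k\<bar>)"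
    unfolding csum_sq_cells
  proof (rule sum_mono)
    fix c assume c: "c \<in> cells N"
    obtain i j k where ce: "c = (i,j,k)" by (cases c) auto
    have "v i j k * \<psi> i j k \<le> \<bar>v i j k\<bar> * \<bar>\<psi> i j k\<bar>" by (simp add: abs_mult[symmetric])
    also have "\<dots> \<le> \<bar>v i j k\<bar> * K" using K[of i j k] c ce by (intro mult_left_mono) auto
    finally show "(case c of (i, j, k) \<Rightarrow> v i j k * \<psi> i j k) \<le> (case c of (i, j, k) \<Rightarrow> K * \<bar>v i j k\<bar>)"
      using ce by (simp add: mult.commute)
  qed
  also have "\<dots> = K * A" unfolding A_def csum_sq_cells by (simp add: sum_distrib_left split_def)
  finally have e2: "csum N (\<lambda>i j k. v i j k * \<psi> i j k) \<le> K * A" .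
  have A0: "0 \<le> A" unfolding A_def by (rule csum_nonneg) simp
  have "A^2 \<le> real (card (cells N)) * (\<Sum>c\<in>cells N. ((\<lambda>(i,j,k). \<bar>v i j k\<bar>) c)^2)"
    unfolding A_def csum_sq_cells by (rule cs_sum[OF finite_cells])
  also have "(\<Sum>c\<in>cells N. ((\<lambda>(i,j,k). \<bar>v i j k\<bar>) c)^2) = csum N (\<lambda>i j k. (v i j k)^2)"
    unfolding csum_sq_cells by (rule sum.cong) auto
  finally have "A^2 \<le> real N ^ 3 * csum N (\<lambda>i j k. (v i j k)^2)" by (simp add: card_cells)
  also have "\<dots> \<le> real N ^ 3 * (3 * real N ^ 2 * En N v)"
    by (intro mult_left_mono global_poinc[OF v N1 z]) simp
  finally have A2: "A^2 \<le> 3 * real N ^ 5 * En N v" by (simp add: algebra_simps eval_nat_numeral)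
  have E0: "0 \<le> En N v" by (rule En_nonneg)
  have "M0 * En N v \<le> h^2 * (K * A)"
  proof -
    have "h^2 * csum N (\<lambda>i j k. v i j k * \<psi> i j k) \<le> h^2 * (K * A)"
      by (intro mult_left_mono e2) simp
    then show ?thesis using EnD_ge[where Dx=Dx and Dy=Dy and Dz=Dz and N=N and v=v, OF M0 Dge] e1 by linarith
  qed
  then have "(M0 * En N v)^2 \<le> (h^2 * (K * A))^2"
    using M0 E0 by (intro power_mono) auto
  also have "\<dots> = h^4 * K^2 * A^2" by (simp add: power_mult_distrib eval_nat_numeral)
  also have "\<dots> \<le> h^4 * K^2 * (3 * real N ^ 5 * En N v)"
    by (intro mult_left_mono A2) auto
  finally have "(M0 * En N v)^2 \<le> h^4 * K^2 * (3 * real N ^ 5 * En N v)" .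
  moreover have "(M0 * En N v)^2 = M0^2 * En N v * En N v" by (simp add: power2_eq_square)
  moreover have "h^4 * K^2 * (3 * real N ^ 5 * En N v) = (3 * h^4 * K^2 * real N ^ 5) * En N v" by simp
  ultimately have "M0^2 * En N v * En N v \<le> (3 * h^4 * K^2 * real N ^ 5) * En N v" by simp
  then show ?thesis
  proof (cases "En N v = 0")
    case True then show ?thesis using h K0 by simp
  next
    case False then have "En N v > 0" using E0 by simp
    then show ?thesis using \<open>M0^2 * En N v * En N v \<le> _\<close> by (simp add: mult_le_cancel_right)
  qed
qed



definition gs :: "real \<Rightarrow> grid \<Rightarrow> grid" where "gs c f = (\<lambda>i j k. c * f i j k)"

interpretation G: vector_space gs
  by unfold_locales (auto simp: gs_def fun_eq_iff algebra_simps)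

interpretation GP: vector_space_pair gs gs ..

lemma sum_apply3: "finite A \<Longrightarrow> (sum F A :: grid) i j k = (\<Sum>a\<in>A. F a i j k)"
  by (induction A rule: finite_induct) auto

definition del :: "nat \<Rightarrow> int \<times> int \<times> int \<Rightarrow> grid" where
  "del N c = (\<lambda>i j k. if (i - fst c) mod int N = 0 \<and> (j - fst (snd c)) mod int N = 0
                          \<and> (k - snd (snd c)) mod int N = 0 then 1 else 0)"

lemma modN_shift: "(x + int N - a) mod int N = (x - a) mod int N"
proof -
  have "x + int N - a = (x - a) + int N" by simp
  then show ?thesis by (simp only: mod_add_self2)
qed

lemma del_per: "del N c \<in> C_per N"
  unfolding C_per_def del_def by (simp add: modN_shift)

lemma C_per_subspace: "G.subspace (C_per N)"
  unfolding G.subspace_def by (auto simp: C_per_def gs_def)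

lemma span_del_sub: "G.span (del N ` cells N) \<subseteq> C_per N"
  by (rule G.span_minimal) (auto simp: del_per C_per_subspace)

lemma rep1:
  assumes N1: "1 \<le> N" and c: "1 \<le> c" "c \<le> int N"
  shows "(t - c) mod int N = 0 \<longleftrightarrow> c = (t - 1) mod int N + 1"
proof -
  have "(t - c) mod int N = 0 \<longleftrightarrow> int N dvd ((t - 1) - (c - 1))" by (simp add: mod_eq_0_iff_dvd)
  also have "\<dots> \<longleftrightarrow> (t - 1) mod int N = (c - 1) mod int N" by (simp add: mod_eq_dvd_iff)
  also have "(c - 1) mod int N = c - 1" using c by (intro mod_pos_pos_trivial) auto
  finally show ?thesis by auto
qed

lemma rep2:
  assumes "\<And>t. g (t + int N) = g t"
  shows "g t = g ((t - 1) mod int N + 1)"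
proof -
  have "t = ((t - 1) mod int N + 1) + ((t - 1) div int N) * int N"
    using div_mult_mod_eq[of "t - 1" "int N"] by linarith
  then have "g t = g (((t - 1) mod int N + 1) + ((t - 1) div int N) * int N)" by simp
  also have "\<dots> = g ((t - 1) mod int N + 1)" by (rule per1[where g=g, OF assms])
  finally show ?thesis .
qed

lemma rep_range: assumes "1 \<le> N" shows "1 \<le> (t - 1) mod int N + 1 \<and> (t - 1) mod int N + 1 \<le> int N"
proof -
  have "(t - 1) mod int N < int N" "0 \<le> (t - 1) mod int N" using assms by simp_all
  then show ?thesis by linarith
qed

lemma C_per_in_span:
  assumes N1: "1 \<le> N" and f: "f \<in> C_per N"
  shows "f \<in> G.span (del N ` cells N)"
proof -
  define r where "r t = (t - 1) mod int N + 1" for t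
  have fe: "f = (\<Sum>c\<in>cells N. gs (f (fst c) (fst (snd c)) (snd (snd c))) (del N c))"
  proof (intro ext)
    fix i j k
    let ?cr = "(r i, r j, r k)"
    have cr: "?cr \<in> cells N" using rep_range[OF N1] by (simp add: cells_def r_def)
    have dl: "del N c i j k = (if c = ?cr then 1 else 0)" if "c \<in> cells N" for c
    proof -
      obtain a b d where ce: "c = (a,b,d)" by (cases c) auto
      have "1 \<le> a" "a \<le> int N" "1 \<le> b" "b \<le> int N" "1 \<le> d" "d \<le> int N"
        using that ce by (auto simp: cells_def)
      then show ?thesis using ce rep1[OF N1] by (auto simp: del_def r_def)
    qed
    have "(\<Sum>c\<in>cells N. gs (f (fst c) (fst (snd c)) (snd (snd c))) (del N c)) i j k
        = (\<Sum>c\<in>cells N. f (fst c) (fst (snd c)) (snd (snd c)) * del N c i j k)"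
      by (simp add: sum_apply3 finite_cells gs_def)
    also have "\<dots> = (\<Sum>c\<in>cells N. if c = ?cr then f (fst c) (fst (snd c)) (snd (snd c)) else 0)"
      by (rule sum.cong) (auto simp: dl)
    also have "\<dots> = f (r i) (r j) (r k)" using cr by (simp add: finite_cells)
    also have "\<dots> = f i j k"
    proof -
      have "f i j k = f (r i) j k" unfolding r_def by (rule rep2[where g="\<lambda>t. f t j k"]) (rule C_per_x[OF f])
      also have "\<dots> = f (r i) (r j) k" unfolding r_def by (rule rep2[where g="\<lambda>t. f _ t k"]) (rule C_per_y[OF f])
      also have "\<dots> = f (r i) (r j) (r k)" unfolding r_def by (rule rep2[where g="\<lambda>t. f _ _ t"]) (rule C_per_z[OF f])
      finally show ?thesis by simp
    qed
    finally show "f i j k = (\<Sum>c\<in>cells N. gs (f (fst c) (fst (snd c)) (snd (snd c))) (del N c)) i j k" by simp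
  qed
  show ?thesis
    by (subst fe) (intro G.span_sum G.span_scale G.span_base imageI)
qed



lemma C_per_sx: "f \<in> C_per N \<Longrightarrow> (\<lambda>i j k. f (i + a) j k) \<in> C_per N"
  using C_per_shift[of f N a 0 0] by simp
lemma C_per_sy: "f \<in> C_per N \<Longrightarrow> (\<lambda>i j k. f i (j + a) k) \<in> C_per N"
  using C_per_shift[of f N 0 a 0] by simp
lemma C_per_sz: "f \<in> C_per N \<Longrightarrow> (\<lambda>i j k. f i j (k + a)) \<in> C_per N"
  using C_per_shift[of f N 0 0 a] by simp
lemma C_per_mx: "f \<in> C_per N \<Longrightarrow> (\<lambda>i j k. f (i - a) j k) \<in> C_per N"
  using C_per_shift[of f N "-a" 0 0] by simp
lemma C_per_my: "f \<in> C_per N \<Longrightarrow> (\<lambda>i j k. f i (j - a) k) \<in> C_per N"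
  using C_per_shift[of f N 0 "-a" 0] by simp
lemma C_per_mz: "f \<in> C_per N \<Longrightarrow> (\<lambda>i j k. f i j (k - a)) \<in> C_per N"
  using C_per_shift[of f N 0 0 "-a"] by simp
lemma C_per_comp: "f \<in> C_per N \<Longrightarrow> (\<lambda>i j k. G (f i j k)) \<in> C_per N"
  by (simp add: C_per_def)
lemma C_per_divc: "f \<in> C_per N \<Longrightarrow> (\<lambda>i j k. f i j k / c) \<in> C_per N"
  by (simp add: C_per_def)
lemma C_per_uminus: "f \<in> C_per N \<Longrightarrow> (\<lambda>i j k. - f i j k) \<in> C_per N"
  by (simp add: C_per_def)

lemma C_per_div_grad:
  assumes v: "v \<in> C_per N" and Dx: "Dx \<in> C_per N" and Dy: "Dy \<in> C_per N" and Dz: "Dz \<in> C_per N"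
  shows "div_grad h Dx Dy Dz v \<in> C_per N"
proof -
  have "(\<lambda>i j k. div_grad h Dx Dy Dz v i j k) \<in> C_per N"
    unfolding div_grad_def
    by (intro C_per_divc C_per_add C_per_minus C_per_mult C_per_sx C_per_sy C_per_sz C_per_mx C_per_my C_per_mz v Dx Dy Dz)
  then show ?thesis by simp
qed

lemma face_per:
  assumes "\<phi> \<in> C_per N"
  shows "face_mob_x Mob \<phi> \<in> C_per N" "face_mob_y Mob \<phi> \<in> C_per N" "face_mob_z Mob \<phi> \<in> C_per N"
proof -
  have "(\<lambda>i j k. Mob ((\<phi> (i+1) j k + \<phi> i j k) / 2)) \<in> C_per N"
    by (rule C_per_comp[where G=Mob], intro C_per_divc C_per_add C_per_sx assms)
  then show "face_mob_x Mob \<phi> \<in> C_per N" by (simp add: face_mob_x_def[abs_def])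
  have "(\<lambda>i j k. Mob ((\<phi> i (j+1) k + \<phi> i j k) / 2)) \<in> C_per N"
    by (rule C_per_comp[where G=Mob], intro C_per_divc C_per_add C_per_sy assms)
  then show "face_mob_y Mob \<phi> \<in> C_per N" by (simp add: face_mob_y_def[abs_def])
  have "(\<lambda>i j k. Mob ((\<phi> i j (k+1) + \<phi> i j k) / 2)) \<in> C_per N"
    by (rule C_per_comp[where G=Mob], intro C_per_divc C_per_add C_per_sz assms)
  then show "face_mob_z Mob \<phi> \<in> C_per N" by (simp add: face_mob_z_def[abs_def])
qed

lemma kernel:
  assumes w: "w \<in> C_per N" and N1: "1 \<le> N" and z: "csum N w = 0"
    and Dx: "Dx \<in> C_per N" and Dy: "Dy \<in> C_per N" and Dz: "Dz \<in> C_per N"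
    and M0: "M0 > 0" and Dge: "\<And>i j k. Dx i j k \<ge> M0 \<and> Dy i j k \<ge> M0 \<and> Dz i j k \<ge> M0"
    and h: "h \<noteq> 0"
    and dg: "\<And>i j k. div_grad h Dx Dy Dz w i j k = 0"
  shows "w i j k = 0"
proof -
  have "- EnD N Dx Dy Dz w / h^2 = 0" using energy_id[OF w Dx Dy Dz, of h] by (simp add: dg csum_const)
  then have "EnD N Dx Dy Dz w = 0" using h by simp
  then have "M0 * En N w \<le> 0" using EnD_ge[where Dx=Dx and Dy=Dy and Dz=Dz and N=N and v=w, OF M0 Dge] by simp
  then have "En N w = 0" using En_nonneg[of N w] M0 by (simp add: mult_le_0_iff)
  then show ?thesis using linf_bound[OF w N1 z, of i j k] by simp
qed

definition Tp :: "nat \<Rightarrow> real \<Rightarrow> grid \<Rightarrow> grid \<Rightarrow> grid \<Rightarrow> grid \<Rightarrow> grid" where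
  "Tp N h Dx Dy Dz v = (\<lambda>i j k. - div_grad h Dx Dy Dz v i j k + csum N v)"

lemma div_grad_add: "div_grad h Dx Dy Dz (v + w) i j k = div_grad h Dx Dy Dz v i j k + div_grad h Dx Dy Dz w i j k"
  by (simp add: div_grad_def add_divide_distrib[symmetric] algebra_simps)

lemma div_grad_scale: "div_grad h Dx Dy Dz (gs c v) i j k = c * div_grad h Dx Dy Dz v i j k"
  by (simp add: div_grad_def gs_def algebra_simps)

lemma csum_plus: "csum N (v + w) = csum N v + csum N w"
  using csum_add[of N v w] by (simp add: plus_fun_def)

lemma Tp_linear: "Vector_Spaces.linear gs gs (Tp N h Dx Dy Dz)"
  unfolding Vector_Spaces.linear_iff
proof (intro conjI allI)
  show "vector_space gs" by (rule G.vector_space_axioms)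
  show "vector_space gs" by (rule G.vector_space_axioms)
  fix x y :: grid
  show "Tp N h Dx Dy Dz (x + y) = Tp N h Dx Dy Dz x + Tp N h Dx Dy Dz y"
    by (simp add: Tp_def fun_eq_iff div_grad_add csum_plus)
next
  fix c x
  show "Tp N h Dx Dy Dz (gs c x) = gs c (Tp N h Dx Dy Dz x)"
    unfolding Tp_def by (simp only: div_grad_scale) (simp add: gs_def csum_cmult algebra_simps)
qed



lemma existence:
  assumes N1: "1 \<le> N" and h: "h \<noteq> 0"
    and Dx: "Dx \<in> C_per N" and Dy: "Dy \<in> C_per N" and Dz: "Dz \<in> C_per N"
    and M0: "M0 > 0" and Dge: "\<And>i j k. Dx i j k \<ge> M0 \<and> Dy i j k \<ge> M0 \<and> Dz i j k \<ge> M0"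
    and \<psi>: "\<psi> \<in> C_per N" and z: "csum N \<psi> = 0"
  shows "\<exists>v. v \<in> C_per N \<and> csum N v = 0 \<and> (\<forall>i j k. - div_grad h Dx Dy Dz v i j k = \<psi> i j k)"
proof -
  let ?T = "Tp N h Dx Dy Dz"
  let ?B = "del N ` cells N"
  have finB: "finite ?B" by (simp add: finite_cells)
  have spB: "G.span ?B = C_per N"
    using span_del_sub[of N] C_per_in_span[OF N1] by blast
  have lin: "Vector_Spaces.linear gs gs ?T" by (rule Tp_linear)
  have Tper: "?T x \<in> C_per N" if "x \<in> C_per N" for x
  proof -
    have "(\<lambda>i j k. - div_grad h Dx Dy Dz x i j k + csum N x) \<in> C_per N"
      using C_per_add[OF C_per_uminus[OF C_per_div_grad[OF that Dx Dy Dz, of h]] C_per_const[of "csum N x"]] by simp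
    then show ?thesis by (simp add: Tp_def)
  qed
  have csumT: "csum N (?T x) = real N ^ 3 * csum N x" if "x \<in> C_per N" for x
  proof -
    have "csum N (?T x) = csum N (\<lambda>i j k. (-1) * div_grad h Dx Dy Dz x i j k) + csum N (\<lambda>i j k. csum N x)"
      unfolding Tp_def by (simp add: csum_add[symmetric])
    also have "\<dots> = real N ^ 3 * csum N x"
      using csum_div_grad[OF that Dx Dy Dz, of h] by (simp only: csum_cmult csum_const)
    finally show ?thesis .
  qed
  have inj: "inj_on ?T (C_per N)"
  proof (rule inj_onI)
    fix x y assume x: "x \<in> C_per N" and y: "y \<in> C_per N" and e: "?T x = ?T y"
    define w where "w = x - y"
    have w: "w \<in> C_per N" unfolding w_def using C_per_minus[OF x y] by (simp add: fun_diff_def)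
    have Tw: "?T w = 0" unfolding w_def using e GP.linear_diff[OF lin, of x y] by simp
    then have "csum N (?T w) = 0" by (simp add: csum_const[of N 0, simplified] zero_fun_def)
    then have zw: "csum N w = 0" using csumT[OF w] N1 by simp
    have "div_grad h Dx Dy Dz w i j k = 0" for i j k
      using fun_cong[OF fun_cong[OF fun_cong[OF Tw, of i], of j], of k] zw by (simp add: Tp_def)
    then have "w i j k = 0" for i j k by (rule kernel[OF w N1 zw Dx Dy Dz M0 Dge h])
    then have "w = 0" by (intro ext) simp
    then show "x = y" unfolding w_def by simp
  qed
  obtain B0 where B0: "B0 \<subseteq> G.span ?B" "G.independent B0" "G.span ?B \<subseteq> G.span B0"
    "card B0 = G.dim (G.span ?B)"
    by (rule G.basis_exists[of "G.span ?B"])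
  have finB0: "finite B0" using G.independent_span_bound[OF finB B0(2) B0(1)] by simp
  have spB0: "G.span B0 = C_per N"
    using B0 spB G.span_minimal[OF B0(1) G.subspace_span] by auto
  have injB0: "inj_on ?T (G.span B0)" using inj spB0 by simp
  have indT: "G.independent (?T ` B0)"
    by (rule GP.linear_independent_injective_image[OF lin B0(2) injB0])
  have cardT: "card (?T ` B0) = card B0"
    using card_image[OF inj_on_subset[OF injB0 G.span_superset]] .
  have \<psi>in: "\<psi> \<in> G.span (?T ` B0)"
  proof (rule ccontr)
    assume nin: "\<psi> \<notin> G.span (?T ` B0)"
    have ind2: "G.independent (insert \<psi> (?T ` B0))" by (rule G.independent_insertI[OF nin indT])
    have sub: "insert \<psi> (?T ` B0) \<subseteq> G.span B0"
      using \<psi> spB0 Tper G.span_superset[of B0] by auto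
    have "card (insert \<psi> (?T ` B0)) \<le> card B0"
      using G.independent_span_bound[OF finB0 ind2 sub] by simp
    moreover have "\<psi> \<notin> ?T ` B0" using nin G.span_superset by blast
    ultimately show False using cardT finB0 by simp
  qed
  then obtain g where g: "g \<in> G.span B0" "\<psi> = ?T g"
    using GP.linear_span_image[OF lin, of B0] by auto
  have gp: "g \<in> C_per N" using g spB0 by simp
  have "csum N \<psi> = real N ^ 3 * csum N g" using csumT[OF gp] g by simp
  then have zg: "csum N g = 0" using z N1 by simp
  have "- div_grad h Dx Dy Dz g i j k = \<psi> i j k" for i j k using g(2) zg by (simp add: Tp_def)
  then show ?thesis using gp zg by blast
qed



lemma div_grad_diff: "div_grad h Dx Dy Dz (\<lambda>i j k. u i j k - v i j k) i j k
   = div_grad h Dx Dy Dz u i j k - div_grad h Dx Dy Dz v i j k"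
  by (simp add: div_grad_def diff_divide_distrib[symmetric] algebra_simps)

lemma final_bound:
  assumes L: "L > 0" and K: "K \<ge> 0" and N1: "1 \<le> N" and M0: "M0 > 0"
    and En: "M0^2 * E \<le> 3 * (L / real N)^4 * K^2 * real N ^ 5"
    and x: "\<bar>x\<bar> \<le> 4 * sqrt (24 * E)" and E0: "0 \<le> E"
  shows "\<bar>x\<bar> \<le> (36 * K * L^2 * sqrt L) / M0 * (L / real N) powr (-1/2)"
proof -
  have Np: "real N > 0" using N1 by simp
  have LN: "L / real N > 0" using L Np by simp
  have pw: "(L / real N) powr (-1/2) = 1 / sqrt (L / real N)"
  proof -
    have "(-1/2::real) = - (1/2)" by simp
    then have "(L / real N) powr (-1/2) = 1 / (L / real N) powr (1/2)" by (simp add: powr_minus_divide)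
    then show ?thesis using LN by (simp add: powr_half_sqrt)
  qed
  define T where "T = (36 * K * L^2 * sqrt L) / M0 * (L / real N) powr (-1/2)"
  have T0: "0 \<le> T" unfolding T_def pw using K L M0 LN by simp
  have T2: "T^2 = 1296 * K^2 * L^4 * real N / M0^2"
  proof -
    have "T^2 = (36 * K * L^2 * sqrt L)^2 / M0^2 / (sqrt (L / real N))^2"
      unfolding T_def pw by (simp add: power_divide power_mult_distrib)
    also have "\<dots> = 1296 * K^2 * L^4 * L / M0^2 / (L / real N)"
      using L LN by (simp add: power_mult_distrib eval_nat_numeral)
    also have "\<dots> = 1296 * K^2 * L^4 * real N / M0^2"
      using L Np M0 by (simp add: field_simps)
    finally show ?thesis .
  qed
  have E1: "E \<le> 3 * K^2 * L^4 * real N / M0^2"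
  proof -
    have q: "(L / real N)^4 * real N ^ 5 = L^4 * real N"
      using Np by (simp add: field_simps eval_nat_numeral)
    have "3 * (L / real N)^4 * K^2 * real N ^ 5 = 3 * K^2 * ((L / real N)^4 * real N ^ 5)"
      by (simp add: algebra_simps)
    also have "\<dots> = 3 * K^2 * L^4 * real N" by (simp add: q)
    finally have "3 * (L / real N)^4 * K^2 * real N ^ 5 = 3 * K^2 * L^4 * real N" .
    then have "M0^2 * E \<le> 3 * K^2 * L^4 * real N" using En by linarith
    then show ?thesis using M0 by (simp add: field_simps)
  qed
  have "x^2 \<le> (4 * sqrt (24 * E))^2"
    using x by (metis abs_ge_zero power2_abs power_mono)
  also have "\<dots> = 384 * E" using E0 by (simp add: power_mult_distrib)
  also have "\<dots> \<le> 384 * (3 * K^2 * L^4 * real N / M0^2)" using E1 by simp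
  also have "\<dots> \<le> T^2" unfolding T2 using K L Np M0 by (simp add: divide_right_mono)
  finally have "x^2 \<le> T^2" .
  then have "\<bar>x\<bar> \<le> \<bar>T\<bar>" by (simp add: abs_le_square_iff)
  then show ?thesis using T0 unfolding T_def by simp
qed

theorem lemma3p2:
  fixes L M :: real
  assumes "L > 0" and "M > 0"
  shows "\<exists>C3 > 0. \<forall>(N::nat) (M0::real) (Mob::real \<Rightarrow> real) (\<phi>n::grid) (\<phi>1::grid) (\<phi>2::grid).
           N \<ge> 1 \<longrightarrow> M0 > 0 \<longrightarrow> \<phi>n \<in> C_per N \<longrightarrow>
           (\<forall>i j k. face_mob_x Mob \<phi>n i j k \<ge> M0 \<and> face_mob_y Mob \<phi>n i j k \<ge> M0
                     \<and> face_mob_z Mob \<phi>n i j k \<ge> M0) \<longrightarrow>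
           \<phi>1 \<in> C_per N \<longrightarrow> \<phi>2 \<in> C_per N \<longrightarrow>
           ip (L / real N) N (\<lambda>i j k. \<phi>1 i j k - \<phi>2 i j k) (\<lambda>i j k. 1) = 0 \<longrightarrow>
           sup_norm N \<phi>1 < 1 \<longrightarrow> sup_norm N \<phi>2 \<le> M \<longrightarrow>
           sup_norm N (L_inv N (L / real N) Mob \<phi>n (\<lambda>i j k. \<phi>1 i j k - \<phi>2 i j k))
             \<le> C3 / M0 * (L / real N) powr (-1/2)"
proof (intro exI[of _ "36 * (1 + M) * L^2 * sqrt L"] conjI allI impI)
  show "0 < 36 * (1 + M) * L^2 * sqrt L" using assms by simp
  fix N :: nat and M0 :: real and Mob :: "real \<Rightarrow> real" and \<phi>n \<phi>1 \<phi>2 :: grid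
  assume N1: "N \<ge> 1" and M0: "M0 > 0" and \<phi>n: "\<phi>n \<in> C_per N"
    and Dge0: "\<forall>i j k. face_mob_x Mob \<phi>n i j k \<ge> M0 \<and> face_mob_y Mob \<phi>n i j k \<ge> M0
                     \<and> face_mob_z Mob \<phi>n i j k \<ge> M0"
    and \<phi>1: "\<phi>1 \<in> C_per N" and \<phi>2: "\<phi>2 \<in> C_per N"
    and ipz: "ip (L / real N) N (\<lambda>i j k. \<phi>1 i j k - \<phi>2 i j k) (\<lambda>i j k. 1) = 0"
    and s1: "sup_norm N \<phi>1 < 1" and s2: "sup_norm N \<phi>2 \<le> M"
  define h where "h = L / real N"
  define Dx where "Dx = face_mob_x Mob \<phi>n"
  define Dy where "Dy = face_mob_y Mob \<phi>n"
  define Dz where "Dz = face_mob_z Mob \<phi>n"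
  define \<psi> where "\<psi> = (\<lambda>i j k. \<phi>1 i j k - \<phi>2 i j k)"
  have hp: "h > 0" unfolding h_def using assms N1 by simp
  have Dx: "Dx \<in> C_per N" and Dy: "Dy \<in> C_per N" and Dz: "Dz \<in> C_per N"
    unfolding Dx_def Dy_def Dz_def using face_per[OF \<phi>n] by auto
  have Dge: "\<And>i j k. Dx i j k \<ge> M0 \<and> Dy i j k \<ge> M0 \<and> Dz i j k \<ge> M0"
    using Dge0 unfolding Dx_def Dy_def Dz_def by blast
  have \<psi>p: "\<psi> \<in> C_per N" unfolding \<psi>_def by (rule C_per_minus[OF \<phi>1 \<phi>2])
  have \<psi>z: "csum N \<psi> = 0"
  proof -
    have "h^3 * csum N \<psi> = 0" using ipz unfolding ip_def \<psi>_def h_def by (simp add: cells_sum)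
    then show ?thesis using hp by simp
  qed
  have K: "\<bar>\<psi> i j k\<bar> \<le> 1 + M" if "(i,j,k) \<in> cells N" for i j k
  proof -
    have "\<bar>\<phi>1 i j k\<bar> \<le> sup_norm N \<phi>1" "\<bar>\<phi>2 i j k\<bar> \<le> sup_norm N \<phi>2"
      using sup_norm_ge[OF that] by auto
    then show ?thesis unfolding \<psi>_def using s1 s2 by linarith
  qed
  obtain v where v: "v \<in> C_per N" and vz: "csum N v = 0"
    and veq: "\<And>i j k. - div_grad h Dx Dy Dz v i j k = \<psi> i j k"
    using existence[OF N1 _ Dx Dy Dz M0 Dge \<psi>p \<psi>z, of h] hp by auto
  have Linv: "L_inv N h Mob \<phi>n \<psi> = v"
    unfolding L_inv_def Dx_def[symmetric] Dy_def[symmetric] Dz_def[symmetric]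
  proof (rule the_equality)
    show "v \<in> C_per0 N \<and> (\<forall>i j k. - div_grad h Dx Dy Dz v i j k = \<psi> i j k)"
      using v vz veq by (simp add: C_per0_def cells_sum)
  next
    fix u assume u: "u \<in> C_per0 N \<and> (\<forall>i j k. - div_grad h Dx Dy Dz u i j k = \<psi> i j k)"
    have up: "u \<in> C_per N" and uz: "csum N u = 0" using u by (auto simp: C_per0_def cells_sum)
    define w where "w = (\<lambda>i j k. u i j k - v i j k)"
    have wp: "w \<in> C_per N" unfolding w_def by (rule C_per_minus[OF up v])
    have wz: "csum N w = 0" unfolding w_def using uz vz by (simp add: csum_diff)
    have dg: "div_grad h Dx Dy Dz w i j k = 0" for i j k
    proof -
      have "- div_grad h Dx Dy Dz u i j k = \<psi> i j k" using u by blast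
      then show ?thesis using veq[of i j k] unfolding w_def div_grad_diff by linarith
    qed
    have "w i j k = 0" for i j k by (rule kernel[OF wp N1 wz Dx Dy Dz M0 Dge _ dg]) (use hp in simp)
    then show "u = v" unfolding w_def by (simp add: fun_eq_iff)
  qed
  have EB: "M0^2 * En N v \<le> 3 * h^4 * (1 + M)^2 * real N ^ 5"
    by (rule energy_bound[OF v N1 vz Dx Dy Dz M0 Dge hp veq K])
  show "sup_norm N (L_inv N (L / real N) Mob \<phi>n (\<lambda>i j k. \<phi>1 i j k - \<phi>2 i j k))
             \<le> 36 * (1 + M) * L^2 * sqrt L / M0 * (L / real N) powr (-1/2)"
    unfolding h_def[symmetric] \<psi>_def[symmetric] Linv
  proof (rule sup_norm_le[OF N1])
    fix i j k
    show "\<bar>v i j k\<bar> \<le> 36 * (1 + M) * L^2 * sqrt L / M0 * h powr (-1/2)"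
      unfolding h_def by (rule final_bound[OF assms(1) _ N1 M0 EB[unfolded h_def] linf_bound[OF v N1 vz] En_nonneg])
         (use assms in simp)
  qed
qed


end
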